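(* Let $n\ge 1$ and, for $i=1,\dots,n$, let $f_i:\mathbb{R}^{d_i}\to\mathbb{R}$, $A_i\in\mathbb{R}^{p\times d_i}$, and let $b\in\mathbb{R}^p$. Set $d=\sum_i d_i$, $\mathbf{x}=[x_1^\top,\dots,x_n^\top]^\top\in\mathbb{R}^d$, $f(\mathbf{x})=\sum_{i=1}^n f_i(x_i)$, $A=[A_1,\dots,A_n]\in\mathbb{R}^{p\times d}$. Consider the problem $\min_{\mathbf{x}\in\mathbb{R}^d} f(\mathbf{x})$ subject to $A\mathbf{x}=b$, assumed to have at least one optimal solution. Suppose each $f_i$ is differentiable on $\mathbb{R}^{d_i}$ with locally Lipschitz gradient, and $\mu_i$-strongly convex for some $\mu_i>0$, and that there exists $\mathbf{x}$ with $A\mathbf{x}=b$. Fix $\alpha>0$ and consider the dynamics $$\dot{\mathbf{x}}=-\alpha\big(\nabla f(\mathbf{x})+A^\top\lambda\big)-A^\top(A\mathbf{x}-b),\qquad \dot\lambda=A\mathbf{x}-b,$$ where $\nabla f(\mathbf{x})=[\nabla f_1(x_1)^\top,\dots,\nabla f_n(x_n)^\top]^\top$. Then for every initial point with $\mathbf{x}(0)\in\mathbb{R}^d$ arbitrary and $\lambda(0)=0$, the trajectory $(\mathbf{x}(t),\lambda(t))$ converges exponentially to a saddle point of the augmented Lagrangian $\mathcal{L}_\alpha(\mathbf{x},\lambda)=f(\mathbf{x})+\lambda^\top(A\mathbf{x}-b)+\frac{1}{2\alpha}\|A\mathbf{x}-b\|^2$.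
   Context: A saddle point of $\mathcal{L}_\alpha$ is a pair $(\mathbf{x}^*,\lambda^* )\in\mathbb{R}^d\times\mathbb{R}^p$ with $\mathcal{L}_\alpha(\mathbf{x}^*,\lambda)\le\mathcal{L}_\alpha(\mathbf{x}^*,\lambda^* )\le\mathcal{L}_\alpha(\mathbf{x},\lambda^* )$ for all $\mathbf{x},\lambda$. Exponential convergence to $(\mathbf{x}^*,\lambda^* )$ means there are constants $C,c>0$ with $\|(\mathbf{x}(t),\lambda(t))-(\mathbf{x}^*,\lambda^* )\|\le Ce^{-ct}$ for all $t\ge0$. No structural assumption on $A$ (such as full row rank) is made. *)

theory Defs
  imports "HOL-Analysis.Analysis"
begin

definition strongly_convex_on :: "'a::real_normed_vector set \<Rightarrow> ('a \<Rightarrow> real) \<Rightarrow> real \<Rightarrow> bool" where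
  "strongly_convex_on S f mu \<longleftrightarrow> convex S \<and>
     (\<forall>x\<in>S. \<forall>y\<in>S. \<forall>t::real. 0 \<le> t \<and> t \<le> 1 \<longrightarrow>
        f (t *\<^sub>R x + (1 - t) *\<^sub>R y) \<le> t * f x + (1 - t) * f y - mu / 2 * t * (1 - t) * (norm (x - y))\<^sup>2)"

definition locally_lipschitz :: "('a::metric_space \<Rightarrow> 'b::metric_space) \<Rightarrow> bool" where
  "locally_lipschitz g \<longleftrightarrow> (\<forall>x. \<exists>e>0. \<exists>L. L-lipschitz_on (ball x e) g)"

text \<open>Block structure: coordinates of R^d (index type 'd) are partitioned into blocks
  indexed by 'n via blk.  The block-i embedding of R^{d_i} is the subspace block_space blk i,
  and block_proj blk i extracts x_i (padded with zeros).\<close>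
definition block_proj :: "('d \<Rightarrow> 'n) \<Rightarrow> 'n \<Rightarrow> real^'d \<Rightarrow> real^'d" where
  "block_proj blk i x = (\<chi> j. if blk j = i then x $ j else 0)"

definition block_space :: "('d \<Rightarrow> 'n) \<Rightarrow> 'n \<Rightarrow> (real^'d) set" where
  "block_space blk i = range (block_proj blk i)"

definition aug_lagrangian ::
  "real \<Rightarrow> (real^'d \<Rightarrow> real) \<Rightarrow> real^'d^'p \<Rightarrow> real^'p \<Rightarrow> real^'d \<Rightarrow> real^'p \<Rightarrow> real" where
  "aug_lagrangian \<alpha> f A b x l =
     f x + l \<bullet> (A *v x - b) + 1 / (2 * \<alpha>) * (norm (A *v x - b))\<^sup>2"

definition saddle_point :: "('a \<Rightarrow> 'b \<Rightarrow> real) \<Rightarrow> 'a \<Rightarrow> 'b \<Rightarrow> bool" where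
  "saddle_point L xs ls \<longleftrightarrow> (\<forall>x l. L xs l \<le> L xs ls \<and> L xs ls \<le> L x ls)"

end

theory Submission
  imports Defs
begin

lemma hvd_inner:
  fixes f g :: "real \<Rightarrow> 'a::real_inner"
  assumes "(f has_vector_derivative f') (at t within S)" "(g has_vector_derivative g') (at t within S)"
  shows "((\<lambda>t. f t \<bullet> g t) has_real_derivative (f' \<bullet> g t + f t \<bullet> g')) (at t within S)"
proof -
  have "((\<lambda>t. f t \<bullet> g t) has_derivative (\<lambda>h. f t \<bullet> (h *\<^sub>R g') + (h *\<^sub>R f') \<bullet> g t)) (at t within S)"
    using has_derivative_inner[OF assms[unfolded has_vector_derivative_def]] .
  then show ?thesis unfolding has_field_derivative_def
    by (rule has_derivative_eq_rhs) (auto simp: algebra_simps inner_commute)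
qed

lemma hvd_mat:
  fixes f :: "real \<Rightarrow> real^'n::finite"
  assumes "(f has_vector_derivative f') F"
  shows "((\<lambda>t. A *v f t) has_vector_derivative (A *v f')) F"
proof -
  have "bounded_linear (\<lambda>x. A *v (x::real^'n))" by (simp add: linear_linear)
  then show ?thesis using bounded_linear.has_vector_derivative[OF _ assms] by blast
qed

lemma nonincr:
  fixes \<phi> :: "real \<Rightarrow> real"
  assumes der: "\<And>t. t \<ge> 0 \<Longrightarrow> (\<phi> has_real_derivative D t) (at t within {0..})"
    and neg: "\<And>t. t \<ge> 0 \<Longrightarrow> D t \<le> 0" and "0 \<le> s" "s \<le> t"
  shows "\<phi> t \<le> \<phi> s"
proof (cases "s = t")
  case True then show ?thesis by simp
next
  case False
  then have st: "s < t" using assms by simp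
  have cont: "continuous_on {0..} \<phi>"
    using der by (metis DERIV_continuous atLeast_iff continuous_on_eq_continuous_within)
  have dat: "(\<phi> has_real_derivative D u) (at u)" if "u > 0" for u
  proof -
    have "(\<phi> has_real_derivative D u) (at u within {0<..})"
    proof (rule DERIV_subset)
      show "(\<phi> has_real_derivative D u) (at u within {0..})" using der that by simp
    qed auto
    then show ?thesis using that by (metis at_within_open greaterThan_iff open_greaterThan)
  qed
  have c2: "continuous_on {s..t} \<phi>"
    using continuous_on_subset[OF cont] assms(3) by auto
  have d2: "\<phi> differentiable (at u)" if "s < u" "u < t" for u
    using dat[of u] that assms(3) real_differentiable_def by force
  obtain l z where z: "s < z" "z < t" "DERIV \<phi> z :> l" "\<phi> t - \<phi> s = (t - s) * l"
    using MVT[OF st c2 d2] by blast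
  then have "l = D z" using dat[of z] assms(3) DERIV_unique by auto
  then have "l \<le> 0" using neg[of z] z assms(3) by simp
  have "(t - s) * l \<le> 0" by (rule mult_nonneg_nonpos) (use \<open>l \<le> 0\<close> st in auto)
  then show ?thesis using z(4) by linarith
qed

lemma sc_grad_ineq:
  fixes f :: "'a::real_inner \<Rightarrow> real"
  assumes sc: "\<And>x y t. 0 \<le> t \<Longrightarrow> t \<le> 1 \<Longrightarrow>
      f (t *\<^sub>R x + (1 - t) *\<^sub>R y) \<le> t * f x + (1 - t) * f y - m / 2 * t * (1 - t) * (norm (x - y))\<^sup>2"
    and der: "\<And>z. (f has_derivative (\<lambda>h. h \<bullet> G z)) (at z)"
  shows "f y + G y \<bullet> (x - y) + m / 2 * (norm (x - y))\<^sup>2 \<le> f x"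
proof -
  define \<phi> where "\<phi> s = f (s *\<^sub>R x + (1 - s) *\<^sub>R y)" for s
  have lin: "((\<lambda>s. s *\<^sub>R x + (1 - s) *\<^sub>R y) has_derivative (\<lambda>h. h *\<^sub>R (x - y))) (at 0)"
    by (rule derivative_eq_intros refl | simp add: algebra_simps)+
  have "(\<phi> has_derivative (\<lambda>h. (h *\<^sub>R (x - y)) \<bullet> G y)) (at 0)"
    unfolding \<phi>_def using has_derivative_compose[OF lin, of f "\<lambda>h. h \<bullet> G y"] der[of y] by simp
  then have "(\<phi> has_real_derivative (G y \<bullet> (x - y))) (at 0)"
    unfolding has_field_derivative_def
    by (rule has_derivative_eq_rhs) (auto simp: inner_commute)
  then have lim0: "((\<lambda>s. (\<phi> s - \<phi> 0) / (s - 0)) \<longlongrightarrow> G y \<bullet> (x - y)) (at 0)"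
    using has_field_derivative_iff by blast
  then have lim: "((\<lambda>s. (\<phi> s - \<phi> 0) / s) \<longlongrightarrow> G y \<bullet> (x - y)) (at_right 0)"
    by (simp add: filterlim_at_split)
  have lim2: "((\<lambda>s. f x - f y - m / 2 * (1 - s) * (norm (x - y))\<^sup>2) \<longlongrightarrow> f x - f y - m / 2 * (1 - 0) * (norm (x - y))\<^sup>2) (at_right 0)"
    by (intro tendsto_intros)
  have ev: "eventually (\<lambda>s. (\<phi> s - \<phi> 0) / s \<le> f x - f y - m / 2 * (1 - s) * (norm (x - y))\<^sup>2) (at_right 0)"
  proof -
    have "eventually (\<lambda>s::real. s \<in> {0<..<1}) (at_right 0)"
      by (rule eventually_at_right_real) simp
    then show ?thesis
    proof (rule eventually_mono)
      fix s :: real assume s: "s \<in> {0<..<1}"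
      have p0: "\<phi> 0 = f y" unfolding \<phi>_def by simp
      have "\<phi> s \<le> s * f x + (1 - s) * f y - m / 2 * s * (1 - s) * (norm (x - y))\<^sup>2"
        unfolding \<phi>_def using sc[of s x y] s by auto
      then have "\<phi> s - \<phi> 0 \<le> s * (f x - f y - m / 2 * (1 - s) * (norm (x - y))\<^sup>2)"
        unfolding p0 by (simp add: algebra_simps)
      then show "(\<phi> s - \<phi> 0) / s \<le> f x - f y - m / 2 * (1 - s) * (norm (x - y))\<^sup>2"
        using s by (simp add: divide_le_eq mult.commute)
    qed
  qed
  have "G y \<bullet> (x - y) \<le> f x - f y - m / 2 * (1 - 0) * (norm (x - y))\<^sup>2"
    by (rule tendsto_le[OF _ lim2 lim ev]) simp
  then show ?thesis by simp
qed

lemma sc_mono: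
  fixes f :: "'a::real_inner \<Rightarrow> real"
  assumes sc: "\<And>x y t. 0 \<le> t \<Longrightarrow> t \<le> 1 \<Longrightarrow>
      f (t *\<^sub>R x + (1 - t) *\<^sub>R y) \<le> t * f x + (1 - t) * f y - m / 2 * t * (1 - t) * (norm (x - y))\<^sup>2"
    and der: "\<And>z. (f has_derivative (\<lambda>h. h \<bullet> G z)) (at z)"
  shows "m * (norm (x - y))\<^sup>2 \<le> (G x - G y) \<bullet> (x - y)"
proof -
  have 1: "f y + G y \<bullet> (x - y) + m / 2 * (norm (x - y))\<^sup>2 \<le> f x" by (rule sc_grad_ineq[OF sc der])
  have 2: "f x + G x \<bullet> (y - x) + m / 2 * (norm (y - x))\<^sup>2 \<le> f y" by (rule sc_grad_ineq[OF sc der])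
  have "norm (y - x) = norm (x - y)" by (rule norm_minus_commute)
  moreover have "G x \<bullet> (y - x) = - (G x \<bullet> (x - y))" by (simp add: inner_diff_right)
  ultimately show ?thesis using 1 2 by (simp add: inner_diff_left)
qed

lemma block_norm_sum:
  fixes blk :: "'d::finite \<Rightarrow> 'n::finite" and v :: "real^'d"
  shows "(\<Sum>i\<in>UNIV. (norm (block_proj blk i v))\<^sup>2) = (norm v)\<^sup>2"
proof -
  have "(\<Sum>i\<in>UNIV. (norm (block_proj blk i v))\<^sup>2) = (\<Sum>i\<in>UNIV. \<Sum>j\<in>UNIV. if blk j = i then v $ j * v $ j else 0)"
    by (simp add: power2_norm_eq_inner inner_vec_def block_proj_def if_distrib cong: if_cong)
  also have "\<dots> = (\<Sum>j\<in>UNIV. \<Sum>i\<in>UNIV. if blk j = i then v $ j * v $ j else 0)"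
    by (rule sum.swap)
  also have "\<dots> = (\<Sum>j\<in>UNIV. v $ j * v $ j)" by simp
  also have "\<dots> = (norm v)\<^sup>2" by (simp add: power2_norm_eq_inner inner_vec_def)
  finally show ?thesis .
qed

lemma block_proj_lin:
  "block_proj blk i (a *\<^sub>R x + c *\<^sub>R y) = a *\<^sub>R block_proj blk i x + c *\<^sub>R block_proj blk i y"
  "block_proj blk i (x - y) = block_proj blk i x - block_proj blk i y"
  by (simp_all add: block_proj_def vec_eq_iff)

lemma sum_sc:
  fixes blk :: "'d::finite \<Rightarrow> 'n::finite" and fi :: "'n \<Rightarrow> real^'d \<Rightarrow> real"
  assumes block_dep: "\<And>i z. fi i z = fi i (block_proj blk i z)"
    and mu_pos: "\<And>i. mu i > 0"
    and sconv: "\<And>i. strongly_convex_on (block_space blk i) (fi i) (mu i)"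
    and t: "0 \<le> t" "t \<le> 1"
  shows "(\<Sum>i\<in>UNIV. fi i (t *\<^sub>R x + (1 - t) *\<^sub>R y)) \<le> t * (\<Sum>i\<in>UNIV. fi i x) + (1 - t) * (\<Sum>i\<in>UNIV. fi i y)
           - Min (range mu) / 2 * t * (1 - t) * (norm (x - y))\<^sup>2"
proof -
  let ?m = "Min (range mu)"
  have per: "fi i (t *\<^sub>R x + (1 - t) *\<^sub>R y) \<le> t * fi i x + (1 - t) * fi i y
      - ?m / 2 * t * (1 - t) * (norm (block_proj blk i (x - y)))\<^sup>2" for i
  proof -
    have bx: "block_proj blk i x \<in> block_space blk i" "block_proj blk i y \<in> block_space blk i"
      by (auto simp: block_space_def)
    have "fi i (t *\<^sub>R x + (1 - t) *\<^sub>R y) = fi i (t *\<^sub>R block_proj blk i x + (1 - t) *\<^sub>R block_proj blk i y)"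
      by (subst block_dep) (simp add: block_proj_lin)
    also have "\<dots> \<le> t * fi i (block_proj blk i x) + (1 - t) * fi i (block_proj blk i y)
       - mu i / 2 * t * (1 - t) * (norm (block_proj blk i x - block_proj blk i y))\<^sup>2"
      using sconv[of i] bx t unfolding strongly_convex_on_def by blast
    also have "\<dots> \<le> t * fi i x + (1 - t) * fi i y
       - ?m / 2 * t * (1 - t) * (norm (block_proj blk i (x - y)))\<^sup>2"
    proof -
      have "?m \<le> mu i" by simp
      then have "?m / 2 * (t * (1 - t) * (norm (block_proj blk i (x - y)))\<^sup>2)
           \<le> mu i / 2 * (t * (1 - t) * (norm (block_proj blk i (x - y)))\<^sup>2)"
        using t by (intro mult_right_mono) auto
      then show ?thesis using block_dep[of i x] block_dep[of i y]
        by (simp add: block_proj_lin mult.assoc)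
    qed
    finally show ?thesis .
  qed
  have "(\<Sum>i\<in>UNIV. fi i (t *\<^sub>R x + (1 - t) *\<^sub>R y)) \<le> (\<Sum>i\<in>UNIV. t * fi i x + (1 - t) * fi i y
      - ?m / 2 * t * (1 - t) * (norm (block_proj blk i (x - y)))\<^sup>2)"
    by (rule sum_mono) (rule per)
  also have "\<dots> = t * (\<Sum>i\<in>UNIV. fi i x) + (1 - t) * (\<Sum>i\<in>UNIV. fi i y)
           - ?m / 2 * t * (1 - t) * (\<Sum>i\<in>UNIV. (norm (block_proj blk i (x - y)))\<^sup>2)"
    by (simp add: sum.distrib sum_subtractf sum_distrib_left)
  also have "\<dots> = t * (\<Sum>i\<in>UNIV. fi i x) + (1 - t) * (\<Sum>i\<in>UNIV. fi i y)
           - ?m / 2 * t * (1 - t) * (norm (x - y))\<^sup>2"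
    by (simp add: block_norm_sum)
  finally show ?thesis .
qed

lemma loclip_bound:
  fixes h :: "'a::euclidean_space \<Rightarrow> 'b::real_normed_vector"
  assumes "locally_lipschitz h"
  shows "\<exists>L\<ge>0. \<forall>x\<in>cball p R. norm (h x - h p) \<le> L * norm (x - p)"
proof -
  obtain e L0 where e: "e > 0" and L0: "L0-lipschitz_on (ball p e) h"
    using assms unfolding locally_lipschitz_def by blast
  have L0nn: "L0 \<ge> 0" using lipschitz_on_nonneg[OF L0] .
  have cont: "continuous_on UNIV h"
  proof -
    have "isCont h z" for z
    proof -
      obtain e' L' where "e' > 0" "L'-lipschitz_on (ball z e') h"
        using assms unfolding locally_lipschitz_def by blast
      then have "continuous_on (ball z e') h" using lipschitz_on_continuous_on by blast
      then show ?thesis using \<open>e' > 0\<close> continuous_on_interior interior_ball centre_in_ball by metis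
    qed
    then show ?thesis by (simp add: continuous_at_imp_continuous_on)
  qed
  have "compact (h ` cball p R)"
    by (rule compact_continuous_image[OF continuous_on_subset[OF cont]]) auto
  then obtain M where M: "\<And>x. x \<in> cball p R \<Longrightarrow> norm (h x) \<le> M"
    using compact_imp_bounded bounded_iff by (metis image_eqI)
  define L where "L = max L0 (2 * max M 0 / e)"
  have "norm (h x - h p) \<le> L * norm (x - p)" if x: "x \<in> cball p R" for x
  proof (cases "norm (x - p) < e")
    case True
    then have "x \<in> ball p e" by (simp add: dist_norm norm_minus_commute)
    then have "norm (h x - h p) \<le> L0 * norm (x - p)"
      using lipschitz_on_normD[OF L0] e by auto
    also have "\<dots> \<le> L * norm (x - p)" unfolding L_def by (intro mult_right_mono) auto
    finally show ?thesis .
  next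
    case False
    have "p \<in> cball p R" using x by (auto simp: dist_norm intro: order_trans[OF norm_ge_zero])
    then have "norm (h x - h p) \<le> 2 * max M 0"
      using M[OF x] M[of p] norm_triangle_ineq4[of "h x" "h p"] by linarith
    also have "\<dots> = (2 * max M 0 / e) * e" using e by simp
    also have "\<dots> \<le> (2 * max M 0 / e) * norm (x - p)"
      using False e by (intro mult_left_mono) auto
    also have "\<dots> \<le> L * norm (x - p)" unfolding L_def by (intro mult_right_mono) auto
    finally show ?thesis .
  qed
  moreover have "L \<ge> 0" unfolding L_def using L0nn by simp
  ultimately show ?thesis by blast
qed

lemma decomp_range:
  fixes f :: "'a::euclidean_space \<Rightarrow> 'b::euclidean_space"
  assumes "linear f"
  shows "\<exists>p r. p \<in> range f \<and> (\<forall>z. r \<bullet> f z = 0) \<and> x = p + r"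
proof -
  obtain y z where y: "y \<in> span (range f)" and z: "\<And>w. w \<in> span (range f) \<Longrightarrow> orthogonal z w"
    and x: "x = y + z"
    using orthogonal_subspace_decomp_exists[of "range f" x] by blast
  have sp: "span (range f) = range f"
    using linear_span_image[OF assms, of UNIV] by simp
  have "y \<in> range f" using y sp by simp
  moreover have "\<forall>w. z \<bullet> f w = 0" using z sp by (auto simp: orthogonal_def)
  ultimately show ?thesis using x by blast
qed

lemma linear_vm: "linear (\<lambda>u. u v* (A::real^'d::finite^'p::finite))"
proof -
  have "(\<lambda>u. u v* A) = (\<lambda>u. transpose A *v u)" by simp
  then show ?thesis using matrix_vector_mul_linear[of "transpose A"] by metis
qed

lemma range_AT:
  fixes A :: "real^'d::finite^'p::finite" and v :: "real^'d"
  assumes "\<And>w. A *v w = 0 \<Longrightarrow> v \<bullet> w = 0"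
  shows "\<exists>u. v = u v* A"
proof -
  obtain p r where p: "p \<in> range (\<lambda>u. u v* A)" and r: "\<And>z. r \<bullet> (z v* A) = 0" and v: "v = p + r"
    using decomp_range[OF linear_vm[of A], of v] by blast
  have "((A *v r) v* A) \<bullet> r = 0" using r[of "A *v r"] by (simp add: inner_commute)
  then have "(A *v r) \<bullet> (A *v r) = 0" by (simp add: dot_lmul_matrix)
  then have Ar: "A *v r = 0" by simp
  have "p \<bullet> r = 0" using p r by (auto simp: inner_commute)
  moreover have "v \<bullet> r = 0" using assms Ar by blast
  ultimately have "r \<bullet> r = 0" using v by (simp add: inner_add_left)
  then have "r = 0" by simp
  then show ?thesis using p v by auto
qed

lemma dual_in_range:
  fixes A :: "real^'d::finite^'p::finite" and lam :: "real^'p"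
  shows "\<exists>a. a v* A = lam v* A \<and> a \<in> range ((*v) A)"
proof -
  obtain p r where p: "p \<in> range ((*v) A)" and r: "\<And>z. r \<bullet> (A *v z) = 0" and v: "lam = p + r"
    using decomp_range[OF matrix_vector_mul_linear[of A], of lam] by (auto simp: fun_eq_iff)
  have "(r v* A) \<bullet> (r v* A) = 0" using r[of "r v* A"] by (simp add: dot_lmul_matrix)
  then have "r v* A = 0" by simp
  then have "p v* A = lam v* A" using v by (simp add: vector_matrix_left_distrib)
  then show ?thesis using p by blast
qed

lemma coercive:
  fixes A :: "real^'d::finite^'p::finite"
  shows "\<exists>s>0. \<forall>v\<in>range ((*v) A). s * norm v \<le> norm (v v* A)"
proof -
  have sub: "subspace (range ((*v) A))"
    using subspace_UNIV linear_span_image[OF matrix_vector_mul_linear[of A], of UNIV]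
    by (metis span_UNIV subspace_span)
  have bl: "bounded_linear (\<lambda>u. u v* A)" using linear_vm[of A] by (simp add: linear_linear)
  have inj: "\<forall>v\<in>range ((*v) A). v v* A = 0 \<longrightarrow> v = 0"
  proof (intro ballI impI)
    fix v assume "v \<in> range ((*v) A)" "v v* A = 0"
    then obtain w where w: "v = A *v w" by auto
    have "v \<bullet> v = (v v* A) \<bullet> w" using w by (simp add: dot_lmul_matrix)
    then show "v = 0" using \<open>v v* A = 0\<close> by simp
  qed
  show ?thesis using injective_imp_isometric[OF closed_subspace[OF sub] sub bl inj] by auto
qed

lemma key_ineq:
  fixes \<alpha> \<mu> \<epsilon> L K cs eg qg qr E N Q Ra :: real
  assumes a: "\<alpha> > 0" and ep: "\<epsilon> > 0" and eg: "eg \<ge> \<mu> * E\<^sup>2"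
    and qg: "\<bar>qg\<bar> \<le> Q * L * E" and qr: "\<bar>qr\<bar> \<le> Q * K * Ra"
    and Q: "Q \<ge> cs * N" and nn: "cs > 0" "N \<ge> 0" "E \<ge> 0" "Q \<ge> 0" "Ra \<ge> 0" "K > 0" "L \<ge> 0"
    and e1: "2 * \<epsilon> * L\<^sup>2 \<le> \<mu>" and e2: "\<epsilon> * (1 + K\<^sup>2 / \<alpha>) \<le> 1"
  shows "-2*\<alpha>*eg - 2*Ra\<^sup>2 + 2*\<epsilon>*Ra\<^sup>2 - 2*\<epsilon>*\<alpha>*qg - 2*\<epsilon>*\<alpha>*Q\<^sup>2 - 2*\<epsilon>*qr
           \<le> -\<alpha>*\<mu>*E\<^sup>2 - \<epsilon>*\<alpha>* cs\<^sup>2*N\<^sup>2"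
proof -
  define kk where "kk = K\<^sup>2 / \<alpha>"
  have s1: "-2*\<alpha>*eg \<le> -2*\<alpha>*\<mu>*E\<^sup>2" using eg a by (simp add: mult_left_mono)
  have "2*Q*L*E \<le> Q\<^sup>2/2 + 2*L\<^sup>2*E\<^sup>2"
  proof -
    have "0 \<le> (Q - 2*L*E)\<^sup>2" by simp
    then show ?thesis by (simp add: power2_eq_square algebra_simps)
  qed
  then have s2: "-2*\<epsilon>*\<alpha>*qg \<le> \<epsilon>*\<alpha>*(Q\<^sup>2/2 + 2*L\<^sup>2*E\<^sup>2)"
  proof -
    have "-qg \<le> Q*L*E" using qg by linarith
    then have "-2*qg \<le> Q\<^sup>2/2 + 2*L\<^sup>2*E\<^sup>2" using \<open>2*Q*L*E \<le> _\<close> by linarith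
    then have "(\<epsilon>*\<alpha>) * (-2*qg) \<le> (\<epsilon>*\<alpha>) * (Q\<^sup>2/2 + 2*L\<^sup>2*E\<^sup>2)"
      using ep a by (intro mult_left_mono) auto
    then show ?thesis by (simp add: algebra_simps)
  qed
  have "2*Q*K*Ra \<le> \<alpha>*Q\<^sup>2/2 + 2*K\<^sup>2*Ra\<^sup>2/\<alpha>"
  proof -
    have "0 \<le> (\<alpha>*Q - 2*K*Ra)\<^sup>2" by simp
    then have "4*\<alpha>*Q*K*Ra \<le> \<alpha>\<^sup>2*Q\<^sup>2 + 4*K\<^sup>2*Ra\<^sup>2" by (simp add: power2_eq_square algebra_simps)
    then have "(4*\<alpha>*Q*K*Ra)/(2*\<alpha>) \<le> (\<alpha>\<^sup>2*Q\<^sup>2 + 4*K\<^sup>2*Ra\<^sup>2)/(2*\<alpha>)"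
      using a by (intro divide_right_mono) auto
    then show ?thesis using a by (simp add: power2_eq_square field_simps)
  qed
  then have s3: "-2*\<epsilon>*qr \<le> \<epsilon>*(\<alpha>*Q\<^sup>2/2 + 2*K\<^sup>2*Ra\<^sup>2/\<alpha>)"
  proof -
    have "-2*qr \<le> \<alpha>*Q\<^sup>2/2 + 2*K\<^sup>2*Ra\<^sup>2/\<alpha>" using qr \<open>2*Q*K*Ra \<le> _\<close> by linarith
    then have "\<epsilon> * (-2*qr) \<le> \<epsilon> * (\<alpha>*Q\<^sup>2/2 + 2*K\<^sup>2*Ra\<^sup>2/\<alpha>)"
      using ep by (intro mult_left_mono) auto
    then show ?thesis by (simp add: algebra_simps)
  qed
  have s4: "2*\<epsilon>*\<alpha>*L\<^sup>2*E\<^sup>2 \<le> \<alpha>*\<mu>*E\<^sup>2"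
  proof -
    have "(\<alpha>*E\<^sup>2) * (2*\<epsilon>*L\<^sup>2) \<le> (\<alpha>*E\<^sup>2) * \<mu>" using e1 a by (intro mult_left_mono) auto
    then show ?thesis by (simp add: algebra_simps)
  qed
  have s5: "2*\<epsilon>*Ra\<^sup>2 + 2*\<epsilon>*(K\<^sup>2/\<alpha>)*Ra\<^sup>2 \<le> 2*Ra\<^sup>2"
  proof -
    have "(2*Ra\<^sup>2) * (\<epsilon> * (1 + K\<^sup>2 / \<alpha>)) \<le> (2*Ra\<^sup>2) * 1" using e2 by (intro mult_left_mono) auto
    then show ?thesis by (simp add: algebra_simps)
  qed
  have s6: "\<epsilon>*\<alpha>* cs\<^sup>2*N\<^sup>2 \<le> \<epsilon>*\<alpha>*Q\<^sup>2"
  proof -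
    have "(cs*N)\<^sup>2 \<le> Q\<^sup>2" using Q nn by (intro power_mono) auto
    then have "(\<epsilon>*\<alpha>) * (cs*N)\<^sup>2 \<le> (\<epsilon>*\<alpha>) * Q\<^sup>2" using ep a by (intro mult_left_mono) auto
    then show ?thesis by (simp add: power_mult_distrib algebra_simps)
  qed
  have "\<epsilon>*(\<alpha>*Q\<^sup>2/2 + 2*K\<^sup>2*Ra\<^sup>2/\<alpha>) = \<epsilon>*\<alpha>*Q\<^sup>2/2 + 2*\<epsilon>*(K\<^sup>2/\<alpha>)*Ra\<^sup>2" by (simp add: algebra_simps)
  moreover have "\<epsilon>*\<alpha>*(Q\<^sup>2/2 + 2*L\<^sup>2*E\<^sup>2) = \<epsilon>*\<alpha>*Q\<^sup>2/2 + 2*\<epsilon>*\<alpha>*L\<^sup>2*E\<^sup>2" by (simp add: algebra_simps)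
  ultimately show ?thesis using s1 s2 s3 s4 s5 s6 unfolding kk_def[symmetric] by linarith

qed

lemma conv_lemma:
  fixes A :: "real^'d::finite^'p::finite" and G :: "real^'d \<Rightarrow> real^'d"
    and x :: "real \<Rightarrow> real^'d" and l :: "real \<Rightarrow> real^'p"
  assumes alpha_pos: "\<alpha> > 0" and mupos: "\<mu> > 0"
    and mono: "\<And>u v. \<mu> * (norm (u - v))\<^sup>2 \<le> (G u - G v) \<bullet> (u - v)"
    and lipb: "\<And>R. \<exists>L\<ge>0. \<forall>z\<in>cball xs R. norm (G z - G xs) \<le> L * norm (z - xs)"
    and xs: "A *v xs = b" and kkt: "G xs + ls v* A = 0" and lsr: "ls \<in> range ((*v) A)"
    and ode_x: "\<And>t. t \<ge> 0 \<Longrightarrow>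
        (x has_vector_derivative
           (- \<alpha> *\<^sub>R (G (x t) + transpose A *v l t)
            - transpose A *v (A *v x t - b))) (at t within {0..})"
    and ode_l: "\<And>t. t \<ge> 0 \<Longrightarrow>
        (l has_vector_derivative (A *v x t - b)) (at t within {0..})"
    and l0: "l 0 = 0"
  shows "\<exists>C c. C > 0 \<and> c > 0 \<and> (\<forall>t\<ge>0. norm (x t - xs, l t - ls) \<le> C * exp (- c * t))"
proof -
  have l_range: "l t \<in> range ((*v) A)" if t: "t \<ge> 0" for t
  proof -
    obtain p r where p: "p \<in> range ((*v) A)" and r: "\<And>z. r \<bullet> (A *v z) = 0" and lt: "l t = p + r"
      using decomp_range[OF matrix_vector_mul_linear[of A], of "l t"] by (auto simp: fun_eq_iff)
    have "((\<lambda>s. r \<bullet> l s) has_derivative (\<lambda>h. 0)) (at s within {0..})" if s: "s \<in> {0..}" for s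
    proof -
      have "((\<lambda>s. r \<bullet> l s) has_vector_derivative r \<bullet> (A *v x s - b)) (at s within {0..})"
        using bounded_linear.has_vector_derivative[OF bounded_linear_inner_right ode_l] s by auto
      moreover have "r \<bullet> (A *v x s - b) = 0"
        using r[of "x s - xs"] xs by (simp add: matrix_vector_mult_diff_distrib)
      ultimately show ?thesis by (simp add: has_vector_derivative_def)
    qed
    then obtain c where "\<forall>s\<in>{0..}. r \<bullet> l s = c"
      using has_derivative_zero_constant[of "{0..}" "\<lambda>s. r \<bullet> l s"] by auto
    then have "r \<bullet> l t = r \<bullet> l 0" using t by auto
    then have "r \<bullet> l t = 0" using l0 by simp
    moreover have "r \<bullet> p = 0" using p r by auto
    ultimately have "r \<bullet> r = 0" using lt by (simp add: inner_add_right)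
    then show ?thesis using lt p by simp
  qed
  obtain cs where cs: "cs > 0" and csb: "\<And>v. v \<in> range ((*v) A) \<Longrightarrow> cs * norm v \<le> norm (v v* A)"
    using coercive[of A] by blast
  obtain K1 where K1: "K1 > 0" "\<And>z. norm (A *v z) \<le> norm z * K1"
    using bounded_linear.pos_bounded[of "(*v) A"] by (auto simp: linear_linear)
  obtain K2 where K2: "K2 > 0" "\<And>z. norm (z v* A) \<le> norm z * K2"
    using bounded_linear.pos_bounded[of "\<lambda>z. z v* A"] linear_vm[of A] by (auto simp: linear_linear)
  define K where "K = max K1 K2"
  have Kpos: "K > 0" using K1 unfolding K_def by simp
  have KA: "norm (A *v z) \<le> K * norm z" for z
    using K1(2)[of z] by (smt (verit) K_def mult.commute mult_left_mono norm_ge_zero max.cobounded1)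
  have KAT: "norm (z v* A) \<le> K * norm z" for z
    using K2(2)[of z] by (smt (verit) K_def mult.commute mult_left_mono norm_ge_zero max.cobounded2)
  define e where "e t = x t - xs" for t
  define n where "n t = l t - ls" for t
  define g where "g t = G (x t) - G xs" for t
  define a where "a t = A *v e t" for t
  define q where "q t = n t v* A" for t
  define r where "r t = a t v* A" for t
  define xd where "xd t = - \<alpha> *\<^sub>R (g t + q t) - r t" for t
  have Gxs: "G xs = - (ls v* A)" using kkt by (simp add: eq_neg_iff_add_eq_0)
  have lvm: "(u - w) v* A = u v* A - w v* A" for u w :: "real^'p"
    using linear_diff[OF linear_vm[of A]] by simp
  have axb: "A *v x t - b = a t" for t
    unfolding a_def e_def using xs by (simp add: matrix_vector_mult_diff_distrib)
  have xd_eq: "- \<alpha> *\<^sub>R (G (x t) + transpose A *v l t) - transpose A *v (A *v x t - b) = xd t" for t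
    unfolding xd_def g_def q_def r_def n_def axb using Gxs lvm by (simp add: algebra_simps)
  have de: "(e has_vector_derivative xd t) (at t within {0..})" if "t \<ge> 0" for t
    unfolding e_def using ode_x[OF that] xd_eq[of t] has_vector_derivative_diff_const by metis
  have dn: "(n has_vector_derivative a t) (at t within {0..})" if "t \<ge> 0" for t
    unfolding n_def using ode_l[OF that] axb[of t] has_vector_derivative_diff_const by metis
  have da: "(a has_vector_derivative A *v xd t) (at t within {0..})" if "t \<ge> 0" for t
    unfolding a_def[abs_def] by (rule hvd_mat[OF de[OF that]])
  have xde: "xd t \<bullet> e t = - \<alpha> * (g t \<bullet> e t) - \<alpha> * (n t \<bullet> a t) - a t \<bullet> a t" for t
    unfolding xd_def q_def r_def a_def
    by (simp add: inner_diff_left inner_add_left dot_lmul_matrix algebra_simps)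
  have qxd: "n t \<bullet> (A *v xd t) = - \<alpha> * (q t \<bullet> g t) - \<alpha> * (q t \<bullet> q t) - q t \<bullet> r t" for t
  proof -
    have "n t \<bullet> (A *v xd t) = q t \<bullet> xd t" unfolding q_def by (simp add: dot_lmul_matrix)
    then show ?thesis unfolding xd_def by (simp add: inner_diff_right inner_add_right algebra_simps)
  qed

  define V where "V t = e t \<bullet> e t + \<alpha> * (n t \<bullet> n t)" for t
  define DV where "DV t = (xd t \<bullet> e t + e t \<bullet> xd t) + \<alpha> * (a t \<bullet> n t + n t \<bullet> a t)" for t
  have dV: "(V has_real_derivative DV t) (at t within {0..})" if "t \<ge> 0" for t
    unfolding V_def[abs_def] DV_def
    by (intro DERIV_add DERIV_cmult hvd_inner de dn that)
  have DV_eq: "DV t = - 2 * \<alpha> * (g t \<bullet> e t) - 2 * (a t \<bullet> a t)" for t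
    unfolding DV_def using xde[of t] by (simp add: inner_commute algebra_simps)
  have ge: "\<mu> * (norm (e t))\<^sup>2 \<le> g t \<bullet> e t" for t
    unfolding g_def e_def by (rule mono)
  have DV_nonpos: "DV t \<le> 0" for t
  proof -
    have "0 \<le> g t \<bullet> e t" using ge[of t] mupos by (smt (verit) mult_nonneg_nonneg zero_le_power2 less_imp_le)
    then have "0 \<le> \<alpha> * (g t \<bullet> e t)" using alpha_pos by simp
    moreover have "0 \<le> a t \<bullet> a t" by simp
    ultimately show ?thesis unfolding DV_eq by linarith
  qed
  have Vdec: "V t \<le> V 0" if "t \<ge> 0" for t
    using nonincr[of V DV 0 t] dV DV_nonpos that by auto
  define R where "R = sqrt (V 0)"
  have eR: "norm (e t) \<le> R" if "t \<ge> 0" for t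
  proof -
    have "(norm (e t))\<^sup>2 \<le> V t"
      unfolding V_def using alpha_pos by (simp add: power2_norm_eq_inner)
    then have "(norm (e t))\<^sup>2 \<le> V 0" using Vdec[OF that] by linarith
    then show ?thesis unfolding R_def using real_le_rsqrt by blast
  qed
  obtain L where L: "L \<ge> 0" "\<And>z. z \<in> cball xs R \<Longrightarrow> norm (G z - G xs) \<le> L * norm (z - xs)"
    using lipb[of R] by blast
  have gL: "norm (g t) \<le> L * norm (e t)" if "t \<ge> 0" for t
  proof -
    have "x t \<in> cball xs R" using eR[OF that] unfolding e_def by (simp add: dist_norm norm_minus_commute)
    then show ?thesis using L(2) unfolding g_def e_def by blast
  qed
  define \<epsilon> where "\<epsilon> = min (min (\<mu> / (2 * (L\<^sup>2 + 1))) (1 / (1 + K\<^sup>2 / \<alpha>))) (min (1 / (2 * K)) (\<alpha> / (2 * K)))"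
  have p1: "\<mu> / (2 * (L\<^sup>2 + 1)) > 0" using mupos by (intro divide_pos_pos) (auto intro: add_nonneg_pos)
  have p2: "1 / (1 + K\<^sup>2 / \<alpha>) > 0" using alpha_pos by (intro divide_pos_pos) (auto intro: add_pos_nonneg)
  have p3: "1 / (2 * K) > 0" using Kpos by simp
  have p4: "\<alpha> / (2 * K) > 0" using Kpos alpha_pos by simp
  have ep: "\<epsilon> > 0" unfolding \<epsilon>_def using p1 p2 p3 p4 by (simp only: min_less_iff_conj min_def) auto
  have e1: "2 * \<epsilon> * L\<^sup>2 \<le> \<mu>"
  proof -
    have "\<epsilon> \<le> \<mu> / (2 * (L\<^sup>2 + 1))" unfolding \<epsilon>_def by simp
    moreover have pos: "0 < 2 * (L\<^sup>2 + 1)" by (simp add: add_nonneg_pos)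
    ultimately have "\<epsilon> * (2 * (L\<^sup>2 + 1)) \<le> \<mu>" using pos_le_divide_eq[OF pos] by blast
    moreover have "2 * \<epsilon> * L\<^sup>2 \<le> \<epsilon> * (2 * (L\<^sup>2 + 1))" using ep by (simp add: algebra_simps)
    ultimately show ?thesis by linarith
  qed
  have e2: "\<epsilon> * (1 + K\<^sup>2 / \<alpha>) \<le> 1"
  proof -
    have "\<epsilon> \<le> 1 / (1 + K\<^sup>2 / \<alpha>)" unfolding \<epsilon>_def by simp
    moreover have "1 + K\<^sup>2 / \<alpha> > 0" using alpha_pos by (simp add: add_pos_nonneg)
    ultimately show ?thesis by (simp add: le_divide_eq)
  qed
  have e3: "\<epsilon> * K \<le> 1 / 2"
  proof -
    have "\<epsilon> \<le> 1 / (2 * K)" unfolding \<epsilon>_def by simp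
    then show ?thesis using Kpos by (simp add: le_divide_eq)
  qed
  have e4: "\<epsilon> * K \<le> \<alpha> / 2"
  proof -
    have "\<epsilon> \<le> \<alpha> / (2 * K)" unfolding \<epsilon>_def by simp
    then show ?thesis using Kpos by (simp add: le_divide_eq)
  qed
  define W where "W t = V t + 2 * \<epsilon> * (n t \<bullet> a t)" for t
  define DW where "DW t = DV t + 2 * \<epsilon> * (a t \<bullet> a t + n t \<bullet> (A *v xd t))" for t
  have dW: "(W has_real_derivative DW t) (at t within {0..})" if "t \<ge> 0" for t
    unfolding W_def[abs_def] DW_def
    by (intro DERIV_add DERIV_cmult hvd_inner dV dn da that)
  have n_range: "n t \<in> range ((*v) A)" if tnn: "t \<ge> 0" for t
  proof -
    obtain w1 where "l t = A *v w1" using l_range[OF tnn] by auto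
    moreover obtain w2 where "ls = A *v w2" using lsr by auto
    ultimately have "n t = A *v (w1 - w2)" unfolding n_def by (simp add: matrix_vector_mult_diff_distrib)
    then show ?thesis by auto
  qed
  have Wbounds: "V t / 2 \<le> W t \<and> W t \<le> 3 / 2 * V t" for t
  proof -
    have "\<bar>n t \<bullet> a t\<bar> \<le> norm (n t) * norm (a t)" by (rule Cauchy_Schwarz_ineq2)
    also have "\<dots> \<le> norm (n t) * (K * norm (e t))" unfolding a_def by (intro mult_left_mono KA) auto
    finally have na: "\<bar>n t \<bullet> a t\<bar> \<le> K * (norm (n t) * norm (e t))" by (simp add: algebra_simps)
    have "2 * (norm (n t) * norm (e t)) \<le> (norm (n t))\<^sup>2 + (norm (e t))\<^sup>2"
      using sum_squares_bound[of "norm (n t)" "norm (e t)"] by simp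
    note sq = this
    have "2 * \<epsilon> * \<bar>n t \<bullet> a t\<bar> \<le> 2 * \<epsilon> * (K * (norm (n t) * norm (e t)))"
      using ep by (intro mult_left_mono na) auto
    also have "\<dots> = \<epsilon> * K * (2 * (norm (n t) * norm (e t)))" by (simp add: algebra_simps)
    also have "\<dots> \<le> \<epsilon> * K * ((norm (n t))\<^sup>2 + (norm (e t))\<^sup>2)"
      using ep Kpos by (intro mult_left_mono sq) auto
    finally have "2 * \<epsilon> * \<bar>n t \<bullet> a t\<bar> \<le> \<epsilon> * K * ((norm (n t))\<^sup>2 + (norm (e t))\<^sup>2)" .
    also have "\<dots> = (\<epsilon> * K) * (norm (n t))\<^sup>2 + (\<epsilon> * K) * (norm (e t))\<^sup>2" by (simp add: algebra_simps)
    also have "\<dots> \<le> (\<alpha> / 2) * (norm (n t))\<^sup>2 + (1 / 2) * (norm (e t))\<^sup>2"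
      using e3 e4 by (intro add_mono mult_right_mono) auto
    finally have "\<bar>2 * \<epsilon> * (n t \<bullet> a t)\<bar> \<le> V t / 2"
      unfolding V_def using ep by (simp add: power2_norm_eq_inner abs_mult)
    then have "- (V t / 2) \<le> 2 * \<epsilon> * (n t \<bullet> a t) \<and> 2 * \<epsilon> * (n t \<bullet> a t) \<le> V t / 2"
      by linarith
    then show ?thesis unfolding W_def by linarith
  qed
  define \<kappa> where "\<kappa> = min (\<alpha> * \<mu>) (\<epsilon> * cs\<^sup>2)"
  have kpos: "\<kappa> > 0" unfolding \<kappa>_def using alpha_pos mupos ep cs by simp
  define c where "c = 2 * \<kappa> / 3"
  have cpos: "c > 0" unfolding c_def using kpos by simp
  have DW_le: "DW t + c * W t \<le> 0" if t: "t \<ge> 0" for t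
  proof -
    have DW_eq: "DW t = -2*\<alpha>*(g t \<bullet> e t) - 2*(norm (a t))\<^sup>2 + 2*\<epsilon>*(norm (a t))\<^sup>2
        - 2*\<epsilon>*\<alpha>*(q t \<bullet> g t) - 2*\<epsilon>*\<alpha>*(norm (q t))\<^sup>2 - 2*\<epsilon>*(q t \<bullet> r t)"
      unfolding DW_def DV_eq qxd by (simp add: power2_norm_eq_inner algebra_simps)
    have qg: "\<bar>q t \<bullet> g t\<bar> \<le> norm (q t) * L * norm (e t)"
    proof -
      have "\<bar>q t \<bullet> g t\<bar> \<le> norm (q t) * norm (g t)" by (rule Cauchy_Schwarz_ineq2)
      also have "\<dots> \<le> norm (q t) * (L * norm (e t))" by (intro mult_left_mono gL t) auto
      finally show ?thesis by (simp add: mult.assoc)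
    qed
    have qr: "\<bar>q t \<bullet> r t\<bar> \<le> norm (q t) * K * norm (a t)"
    proof -
      have "\<bar>q t \<bullet> r t\<bar> \<le> norm (q t) * norm (r t)" by (rule Cauchy_Schwarz_ineq2)
      also have "\<dots> \<le> norm (q t) * (K * norm (a t))" unfolding r_def by (intro mult_left_mono KAT) auto
      finally show ?thesis by (simp add: mult.assoc)
    qed
    have Q: "norm (q t) \<ge> cs * norm (n t)" unfolding q_def using csb n_range[OF t] by blast
    have "DW t \<le> -\<alpha>*\<mu>*(norm (e t))\<^sup>2 - \<epsilon>*\<alpha>*cs\<^sup>2*(norm (n t))\<^sup>2"
      unfolding DW_eq
      by (rule key_ineq[OF alpha_pos ep ge qg qr Q cs norm_ge_zero norm_ge_zero norm_ge_zero norm_ge_zero Kpos L(1) e1 e2])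
    also have "\<dots> \<le> - \<kappa> * V t"
    proof -
      have "\<kappa> * (norm (e t))\<^sup>2 \<le> \<alpha>*\<mu>*(norm (e t))\<^sup>2" unfolding \<kappa>_def by (intro mult_right_mono) auto
      moreover have "\<kappa> * (\<alpha> * (norm (n t))\<^sup>2) \<le> (\<epsilon>*cs\<^sup>2) * (\<alpha> * (norm (n t))\<^sup>2)"
        unfolding \<kappa>_def using alpha_pos by (intro mult_right_mono) auto
      ultimately show ?thesis unfolding V_def by (simp add: power2_norm_eq_inner algebra_simps)
    qed
    finally have "DW t \<le> - \<kappa> * V t" .
    moreover have "c * W t \<le> \<kappa> * V t"
    proof -
      have "c * W t \<le> c * (3 / 2 * V t)" using Wbounds[of t] cpos by (intro mult_left_mono) auto
      then show ?thesis unfolding c_def by simp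
    qed
    ultimately show ?thesis by linarith
  qed
  define \<phi> where "\<phi> t = W t * exp (c * t)" for t
  define D\<phi> where "D\<phi> t = DW t * exp (c * t) + exp (c * t) * c * W t" for t
  have d\<phi>: "(\<phi> has_real_derivative D\<phi> t) (at t within {0..})" if "t \<ge> 0" for t
  proof -
    have "((\<lambda>t. exp (c * t)) has_real_derivative (exp (c * t) * c)) (at t within {0..})"
      by (auto intro!: derivative_eq_intros)
    from DERIV_mult[OF dW[OF that] this] show ?thesis unfolding \<phi>_def[abs_def] D\<phi>_def .
  qed
  have D\<phi>_nonpos: "D\<phi> t \<le> 0" if "t \<ge> 0" for t
  proof -
    have "D\<phi> t = (DW t + c * W t) * exp (c * t)" unfolding D\<phi>_def by (simp add: algebra_simps)
    then show ?thesis using DW_le[OF that] by (simp add: mult_nonpos_nonneg)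
  qed
  have Wexp: "W t \<le> W 0 * exp (- c * t)" if t: "t \<ge> 0" for t
  proof -
    have "\<phi> t \<le> \<phi> 0" using nonincr[of \<phi> D\<phi> 0 t] d\<phi> D\<phi>_nonpos t by auto
    then have "W t * exp (c * t) \<le> W 0" unfolding \<phi>_def by simp
    note A1 = this
    have "exp (c * t) * exp (- c * t) = 1" by (simp add: exp_minus[symmetric] exp_add[symmetric])
    then have "W t = W t * exp (c * t) * exp (- c * t)" by (simp add: mult.assoc)
    also have "\<dots> \<le> W 0 * exp (- c * t)" by (intro mult_right_mono A1) auto
    finally show ?thesis .
  qed
  define m1 where "m1 = min 1 \<alpha>"
  have m1pos: "m1 > 0" unfolding m1_def using alpha_pos by simp
  have W0: "W 0 \<ge> 0"
  proof -
    have "V 0 \<ge> 0" unfolding V_def using alpha_pos by simp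
    then show ?thesis using Wbounds[of 0] by linarith
  qed
  define C where "C = sqrt (2 * W 0 / m1) + 1"
  have Cpos: "C > 0"
  proof -
    have "0 \<le> sqrt (2 * W 0 / m1)" using W0 m1pos by simp
    then show ?thesis unfolding C_def by linarith
  qed
  have final: "norm (x t - xs, l t - ls) \<le> C * exp (- (c / 2) * t)" if t: "t \<ge> 0" for t
  proof -
    have "m1 * ((norm (e t))\<^sup>2 + (norm (n t))\<^sup>2) \<le> V t"
    proof -
      have "m1 * (norm (e t))\<^sup>2 \<le> 1 * (norm (e t))\<^sup>2" unfolding m1_def by (intro mult_right_mono) auto
      moreover have "m1 * (norm (n t))\<^sup>2 \<le> \<alpha> * (norm (n t))\<^sup>2" unfolding m1_def by (intro mult_right_mono) auto
      ultimately show ?thesis unfolding V_def by (simp add: power2_norm_eq_inner algebra_simps)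
    qed
    also have "\<dots> \<le> 2 * W t" using Wbounds[of t] by linarith
    also have "\<dots> \<le> 2 * (W 0 * exp (- c * t))" using Wexp[OF t] by simp
    finally have "(norm (e t))\<^sup>2 + (norm (n t))\<^sup>2 \<le> (2 * W 0 / m1) * exp (- c * t)"
      using m1pos by (simp add: pos_le_divide_eq mult.commute mult.left_commute)
    also have "\<dots> = (sqrt (2 * W 0 / m1) * exp (- (c / 2) * t))\<^sup>2"
    proof -
      have "exp (- c * t) = (exp (- (c / 2) * t))\<^sup>2"
        by (simp add: power2_eq_square exp_add[symmetric])
      then show ?thesis using W0 m1pos by (simp add: power_mult_distrib)
    qed
    finally have "sqrt ((norm (e t))\<^sup>2 + (norm (n t))\<^sup>2) \<le> sqrt (2 * W 0 / m1) * exp (- (c / 2) * t)"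
      using real_le_rsqrt by (metis real_sqrt_le_mono real_sqrt_unique W0 m1pos mult_nonneg_nonneg exp_ge_zero real_sqrt_ge_zero
            divide_nonneg_pos mult_pos_pos zero_less_numeral less_imp_le)
    also have "\<dots> \<le> C * exp (- (c / 2) * t)" unfolding C_def by (intro mult_right_mono) auto
    finally show ?thesis unfolding e_def n_def by (simp add: norm_Pair)
  qed
  show ?thesis
    using Cpos cpos final by (intro exI[of _ C] exI[of _ "c / 2"]) auto
qed

theorem proposition2:
  fixes blk :: "'d::finite \<Rightarrow> 'n::finite"
    and fi :: "'n \<Rightarrow> real^'d \<Rightarrow> real"
    and gradf :: "'n \<Rightarrow> real^'d \<Rightarrow> real^'d"
    and mu :: "'n \<Rightarrow> real"
    and A :: "real^'d^'p::finite"
    and b :: "real^'p"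
    and \<alpha> :: real
    and x :: "real \<Rightarrow> real^'d"
    and l :: "real \<Rightarrow> real^'p"
  assumes block_dep: "\<And>i z. fi i z = fi i (block_proj blk i z)"
    and grad: "\<And>i z. GDERIV (fi i) z :> gradf i z"
    and lip: "\<And>i. locally_lipschitz (gradf i)"
    and mu_pos: "\<And>i. mu i > 0"
    and sconv: "\<And>i. strongly_convex_on (block_space blk i) (fi i) (mu i)"
    and feasible: "\<exists>z. A *v z = b"
    and optimal: "\<exists>z. A *v z = b \<and> (\<forall>y. A *v y = b \<longrightarrow> (\<Sum>i\<in>UNIV. fi i z) \<le> (\<Sum>i\<in>UNIV. fi i y))"
    and alpha_pos: "\<alpha> > 0"
    and ode_x: "\<And>t. t \<ge> 0 \<Longrightarrow>
        (x has_vector_derivative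
           (- \<alpha> *\<^sub>R ((\<Sum>i\<in>UNIV. gradf i (x t)) + transpose A *v l t)
            - transpose A *v (A *v x t - b))) (at t within {0..})"
    and ode_l: "\<And>t. t \<ge> 0 \<Longrightarrow>
        (l has_vector_derivative (A *v x t - b)) (at t within {0..})"
    and l0: "l 0 = 0"
  shows "\<exists>xs ls. saddle_point (aug_lagrangian \<alpha> (\<lambda>z. \<Sum>i\<in>UNIV. fi i z) A b) xs ls \<and>
           (\<exists>C c. C > 0 \<and> c > 0 \<and>
              (\<forall>t\<ge>0. norm (x t - xs, l t - ls) \<le> C * exp (- c * t)))"
proof -
  define f where "f = (\<lambda>z. \<Sum>i\<in>UNIV. fi i z)"
  define G where "G = (\<lambda>z. \<Sum>i\<in>UNIV. gradf i z)"
  define \<mu> where "\<mu> = Min (range mu)"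
  have mupos: "\<mu> > 0" unfolding \<mu>_def using mu_pos by simp
  have fsc: "f (t *\<^sub>R u + (1 - t) *\<^sub>R v) \<le> t * f u + (1 - t) * f v - \<mu> / 2 * t * (1 - t) * (norm (u - v))\<^sup>2"
    if "0 \<le> t" "t \<le> 1" for t u v
    unfolding f_def \<mu>_def by (rule sum_sc[OF block_dep mu_pos sconv that])
  have fder: "(f has_derivative (\<lambda>h. h \<bullet> G z)) (at z)" for z
  proof -
    have "(f has_derivative (\<lambda>h. \<Sum>i\<in>UNIV. h \<bullet> gradf i z)) (at z)"
      unfolding f_def by (rule has_derivative_sum) (use grad in \<open>auto simp: gderiv_def\<close>)
    then show ?thesis unfolding G_def by (simp add: inner_sum_right)
  qed
  note gi = sc_grad_ineq[of f \<mu> G, OF fsc fder]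
  note mono = sc_mono[of f \<mu> G, OF fsc fder]
  obtain xs where xs: "A *v xs = b" and xsopt: "\<And>y. A *v y = b \<Longrightarrow> f xs \<le> f y"
    using optimal unfolding f_def by blast
  have crit: "G xs \<bullet> v = 0" if v: "A *v v = 0" for v
  proof -
    define \<psi> where "\<psi> s = f (xs + s *\<^sub>R v)" for s
    have lin: "((\<lambda>s. xs + s *\<^sub>R v) has_derivative (\<lambda>h. h *\<^sub>R v)) (at 0)"
      by (rule derivative_eq_intros refl | simp)+
    have "(\<psi> has_derivative (\<lambda>h. (h *\<^sub>R v) \<bullet> G xs)) (at 0)"
      unfolding \<psi>_def using has_derivative_compose[OF lin, of f "\<lambda>h. h \<bullet> G xs"] fder[of xs] by simp
    then have d: "(\<psi> has_real_derivative (G xs \<bullet> v)) (at 0)"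
      unfolding has_field_derivative_def
      by (rule has_derivative_eq_rhs) (auto simp: inner_commute)
    have "\<forall>y. \<bar>0 - y\<bar> < 1 \<longrightarrow> \<psi> 0 \<le> \<psi> y"
    proof (intro allI impI)
      fix y :: real
      have "A *v (xs + y *\<^sub>R v) = b" using xs v by (simp add: matrix_vector_right_distrib matrix_vector_mult_scaleR)
      then show "\<psi> 0 \<le> \<psi> y" unfolding \<psi>_def using xsopt by simp
    qed
    then show ?thesis using DERIV_local_min[OF d, of 1] by simp
  qed
  obtain u where u: "G xs = u v* A" using range_AT[of A "G xs"] crit by blast
  obtain ls where ls: "ls v* A = (-u) v* A" and lsr: "ls \<in> range ((*v) A)"
    using dual_in_range[of A "-u"] by blast
  have kkt: "G xs + ls v* A = 0"
    using ls u linear_neg[OF linear_vm[of A], of u] by simp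
  have saddle: "saddle_point (aug_lagrangian \<alpha> f A b) xs ls"
    unfolding saddle_point_def aug_lagrangian_def
  proof (intro allI conjI)
    fix z :: "real^'d" and lam :: "real^'p"
    show "f xs + lam \<bullet> (A *v xs - b) + 1 / (2 * \<alpha>) * (norm (A *v xs - b))\<^sup>2
        \<le> f xs + ls \<bullet> (A *v xs - b) + 1 / (2 * \<alpha>) * (norm (A *v xs - b))\<^sup>2" using xs by simp
    have "ls \<bullet> (A *v z - b) = (ls v* A) \<bullet> (z - xs)"
      using xs by (simp add: dot_lmul_matrix matrix_vector_mult_diff_distrib)
    also have "\<dots> = - (G xs \<bullet> (z - xs))" using kkt by (simp add: eq_neg_iff_add_eq_0 inner_add_left[symmetric] add.commute)
    finally have e1: "ls \<bullet> (A *v z - b) = - (G xs \<bullet> (z - xs))" .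
    have "f xs \<le> f z + ls \<bullet> (A *v z - b)"
    proof -
      have "0 \<le> \<mu> * (norm (z - xs))\<^sup>2 / 2" using mupos by simp
      then show ?thesis using gi[of xs z] e1 by linarith
    qed
    moreover have "0 \<le> 1 / (2 * \<alpha>) * (norm (A *v z - b))\<^sup>2" using alpha_pos by simp
    ultimately show "f xs + ls \<bullet> (A *v xs - b) + 1 / (2 * \<alpha>) * (norm (A *v xs - b))\<^sup>2
        \<le> f z + ls \<bullet> (A *v z - b) + 1 / (2 * \<alpha>) * (norm (A *v z - b))\<^sup>2" using xs by simp
  qed
  have lipb: "\<exists>L\<ge>0. \<forall>z\<in>cball xs R. norm (G z - G xs) \<le> L * norm (z - xs)" for R
  proof -
    have "\<forall>i. \<exists>L\<ge>0. \<forall>z\<in>cball xs R. norm (gradf i z - gradf i xs) \<le> L * norm (z - xs)"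
      using loclip_bound[OF lip] by blast
    then obtain Lf where Lf: "\<And>i. Lf i \<ge> 0"
      "\<And>i z. z \<in> cball xs R \<Longrightarrow> norm (gradf i z - gradf i xs) \<le> Lf i * norm (z - xs)"
      by metis
    show ?thesis
    proof (intro exI[of _ "\<Sum>i\<in>UNIV. Lf i"] conjI ballI)
      show "0 \<le> (\<Sum>i\<in>UNIV. Lf i)" by (simp add: sum_nonneg Lf)
      fix z assume z: "z \<in> cball xs R"
      have "G z - G xs = (\<Sum>i\<in>UNIV. gradf i z - gradf i xs)" unfolding G_def by (simp add: sum_subtractf)
      then have "norm (G z - G xs) \<le> (\<Sum>i\<in>UNIV. norm (gradf i z - gradf i xs))" by (simp add: norm_sum)
      also have "\<dots> \<le> (\<Sum>i\<in>UNIV. Lf i * norm (z - xs))" by (intro sum_mono Lf z)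
      also have "\<dots> = (\<Sum>i\<in>UNIV. Lf i) * norm (z - xs)" by (simp add: sum_distrib_right)
      finally show "norm (G z - G xs) \<le> (\<Sum>i\<in>UNIV. Lf i) * norm (z - xs)" .
    qed
  qed
  have ode_x': "(x has_vector_derivative
           (- \<alpha> *\<^sub>R (G (x t) + transpose A *v l t)
            - transpose A *v (A *v x t - b))) (at t within {0..})" if "t \<ge> 0" for t
    using ode_x[OF that] unfolding G_def .
  have conv: "\<exists>C c. C > 0 \<and> c > 0 \<and> (\<forall>t\<ge>0. norm (x t - xs, l t - ls) \<le> C * exp (- c * t))"
    by (rule conv_lemma[OF alpha_pos mupos mono lipb xs kkt lsr ode_x' ode_l l0])
  show ?thesis using saddle conv unfolding f_def by blast
qed

end
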